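(* Let $p=k_{w_1}+k_{w_2}$ and let $W_1\in\mathbb{R}^{p\times n}$ be a constant (unknown) matrix. Along a given closed-loop trajectory, suppose the state $x:[0,\infty)\to\mathbb{R}^n$ satisfies $$\dot x(t)=W_1^T\Phi(t)+\varepsilon_T(t),$$ where $\Phi:[0,\infty)\to\mathbb{R}^p$ (the regressor $\Phi(t)=\Phi(x(t),u(t))$) and $\varepsilon_T:[0,\infty)\to\mathbb{R}^n$ are piecewise continuous and bounded, $\|\Phi(t)\|\le p_1$, $\|\varepsilon_T(t)\|\le p_2$. Fix scalars $k>0$, $l>0$ and define filtered signals by $$k\dot\Phi_f+\Phi_f=\Phi,\quad k\dot x_f+x_f=x,\quad k\dot\varepsilon_{Tf}+\varepsilon_{Tf}=\varepsilon_T,$$ with $\Phi_f(0)=0$, $x_f(0)=x(0)$, $\varepsilon_{Tf}(0)=0$, and $$\Pi(t)=\int_0^t e^{-l(t-s)}\Phi_f(s)\Phi_f^T(s)\,ds,\qquad K(t)=\int_0^t e^{-l(t-s)}\Phi_f(s)\dot x_f(s)^T\,ds .$$ Fix recorded times $t_1,\dots,t_N$ (with $N\ge p$) and set $\Pi_j=\Pi(t_j)$, $K_j=K(t_j)$. Let $\Gamma_1\in\mathbb{R}^{p\times p}$ be a constant symmetric positive definite matrix, and let the estimate $\hat W_1(t)\in\mathbb{R}^{p\times n}$ evolve according to $$\dot{\hat W}_1=-\Gamma_1\Big(\Pi\hat W_1-K+\sum_{j=1}^N\big(\Pi_j\hat W_1-K_j\big)\Big).$$ Let $\tilde W_1=W_1-\hat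 W_1$ and $P(t)=\Pi(t)+\sum_{j=1}^N\Pi_j$. Assume $\Phi$ is persistently excited and that there exist $T_1>0$ and $\lambda_0>0$ with $\lambda_{\min}(P(t))\ge\lambda_0$ for all $t\ge T_1$. Then, with $V_1=\tfrac12\operatorname{tr}(\tilde W_1^T\Gamma_1^{-1}\tilde W_1)$: (i) if $\varepsilon_T\equiv0$, then $\dot V_1\le-\lambda_0\|\tilde W_1\|^2$ for $t\ge T_1$ and $\tilde W_1(t)\to0$ as $t\to\infty$ (asymptotic stability of $\tilde W_1=0$); (ii) in general, with $y_1(t)=-\int_0^te^{-l(t-\tau)}\Phi_f(\tau)\varepsilon_{Tf}^T(\tau)d\tau$, $y_{1j}=y_1(t_j)$, there is a constant $\nu_1$ with $\|y_1(t)+\sum_{j=1}^Ny_{1j}\|\le\nu_1$ for all $t$, and for $t\ge T_1$, $\dot V_1\le-\lambda_0\|\tilde W_1\|^2+\nu_1\|\tilde W_1\|$; hence $\dot V_1<0$ whenever $\|\tilde W_1\|>\nu_1/\lambda_0$, and $\tilde W_1$ is uniformly ultimately bounded.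
   Context: Norms of matrices are Frobenius norms. Persistent excitation of $\Phi$ means: there exist $\alpha_1,\alpha_2,T_1>0$ such that $\alpha_1I\le\int_t^{t+T_1}\Phi(\tau)\Phi^T(\tau)d\tau\le\alpha_2I$ for all $t>0$. Uniform ultimate boundedness (UUB) of a signal means there is a bound $b$ and for every initial condition a finite time after which the signal's norm stays below $b$. The model arises from a control-affine system $\dot x=f(x)+g(x)u$ with $f(x)=w_1\xi_1(x)+\epsilon_f$, $g(x)=w_2\xi_2(x)+\epsilon_g$, $W_1=[w_1^T;w_2^T]$, $\Phi=[\xi_1^T,u^T\xi_2^T]^T$, $\varepsilon_T=\epsilon_f+\epsilon_gu$. *)

theory Defs
  imports "HOL-Analysis.Analysis"
begin

definition outer :: "real^'p \<Rightarrow> real^'n \<Rightarrow> real^'n^'p" where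
  "outer a b = (\<chi> i j. a $ i * b $ j)"

definition piecewise_continuous :: "(real \<Rightarrow> 'a::real_normed_vector) \<Rightarrow> bool" where
  "piecewise_continuous f \<longleftrightarrow>
     (\<forall>T>0. \<exists>S. finite S \<and>
        (\<forall>t\<in>{0..T} - S. continuous (at t within {0..}) f) \<and>
        (\<forall>s\<in>S. (s > 0 \<longrightarrow> (\<exists>L. (f \<longlongrightarrow> L) (at_left s))) \<and> (\<exists>R. (f \<longlongrightarrow> R) (at_right s))))"

definition loewner_le :: "real^'p^'p \<Rightarrow> real^'p^'p \<Rightarrow> bool" where
  "loewner_le A B \<longleftrightarrow> (\<forall>v. v \<bullet> (A *v v) \<le> v \<bullet> (B *v v))"

definition persistently_exciting :: "(real \<Rightarrow> real^'p) \<Rightarrow> bool" where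
  "persistently_exciting Phi \<longleftrightarrow>
     (\<exists>a1 a2 T1. a1 > 0 \<and> a2 > 0 \<and> T1 > 0 \<and>
        (\<forall>t>0. loewner_le (mat a1) (integral {t..t+T1} (\<lambda>\<tau>. outer (Phi \<tau>) (Phi \<tau>))) \<and>
               loewner_le (integral {t..t+T1} (\<lambda>\<tau>. outer (Phi \<tau>) (Phi \<tau>))) (mat a2)))"

definition pos_def :: "real^'p^'p \<Rightarrow> bool" where
  "pos_def A \<longleftrightarrow> transpose A = A \<and> (\<forall>v. v \<noteq> 0 \<longrightarrow> v \<bullet> (A *v v) > 0)"

definition lambda_min :: "real^'p^'p \<Rightarrow> real" where
  "lambda_min A = Min {c. \<exists>v. v \<noteq> 0 \<and> A *v v = c *\<^sub>R v}"

definition Pi_mat :: "real \<Rightarrow> (real \<Rightarrow> real^'p) \<Rightarrow> real \<Rightarrow> real^'p^'p" where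
  "Pi_mat l Phif t = integral {0..t} (\<lambda>s. exp (- l * (t - s)) *\<^sub>R outer (Phif s) (Phif s))"

definition K_mat :: "real \<Rightarrow> (real \<Rightarrow> real^'p) \<Rightarrow> (real \<Rightarrow> real^'n) \<Rightarrow> real \<Rightarrow> real^'n^'p" where
  "K_mat l Phif xfdot t = integral {0..t} (\<lambda>s. exp (- l * (t - s)) *\<^sub>R outer (Phif s) (xfdot s))"

definition estimator_sol ::
  "real^'p^'p \<Rightarrow> real \<Rightarrow> (real \<Rightarrow> real^'p) \<Rightarrow> (real \<Rightarrow> real^'n) \<Rightarrow> nat \<Rightarrow> (nat \<Rightarrow> real)
     \<Rightarrow> (real \<Rightarrow> real^'n^'p) \<Rightarrow> bool" where
  "estimator_sol Gam l Phif xfdot N tr What \<longleftrightarrow>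
     (\<forall>t\<ge>0. (What has_vector_derivative
        (- (Gam ** (Pi_mat l Phif t ** What t - K_mat l Phif xfdot t
            + (\<Sum>j=1..N. Pi_mat l Phif (tr j) ** What t - K_mat l Phif xfdot (tr j))))))
        (at t within {0..}))"

end

theory Submission
  imports Defs
begin

lemma trace_tr: "trace (transpose A ** B) = A \<bullet> (B :: real^'n^'p)"
proof -
  have "trace (transpose A ** B) = (\<Sum>i\<in>UNIV. \<Sum>k\<in>UNIV. A$k$i * B$k$i)"
    by (simp add: trace_def matrix_matrix_mult_def transpose_def)
  also have "\<dots> = (\<Sum>k\<in>UNIV. \<Sum>i\<in>UNIV. A$k$i * B$k$i)" by (rule sum.swap)
  also have "\<dots> = A \<bullet> B" by (simp add: inner_vec_def)
  finally show ?thesis .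
qed

lemma inner_mm: "A \<bullet> (M ** B) = (transpose M ** A) \<bullet> (B::real^'n^'q)" for A :: "real^'n^'p" and M :: "real^'q^'p"
proof -
  have "A \<bullet> (M ** B) = (\<Sum>i\<in>UNIV. \<Sum>j\<in>UNIV. \<Sum>k\<in>UNIV. A$i$j * M$i$k * B$k$j)"
    by (simp add: inner_vec_def matrix_matrix_mult_def sum_distrib_left mult.assoc)
  also have "\<dots> = (\<Sum>i\<in>UNIV. \<Sum>k\<in>UNIV. \<Sum>j\<in>UNIV. A$i$j * M$i$k * B$k$j)"
    by (rule sum.cong[OF refl], rule sum.swap)
  also have "\<dots> = (\<Sum>k\<in>UNIV. \<Sum>i\<in>UNIV. \<Sum>j\<in>UNIV. A$i$j * M$i$k * B$k$j)"
    by (rule sum.swap)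
  also have "\<dots> = (\<Sum>k\<in>UNIV. \<Sum>j\<in>UNIV. \<Sum>i\<in>UNIV. A$i$j * M$i$k * B$k$j)"
    by (rule sum.cong[OF refl], rule sum.swap)
  also have "\<dots> = (transpose M ** A) \<bullet> B"
    by (simp add: inner_vec_def matrix_matrix_mult_def transpose_def sum_distrib_right sum_distrib_left mult_ac)
  finally show ?thesis .
qed

lemma inner_cols: "A \<bullet> (M ** B) = (\<Sum>j\<in>UNIV. column j A \<bullet> (M *v column j B))" for A :: "real^'n^'p" and M :: "real^'q^'p" and B :: "real^'n^'q"
proof -
  have "A \<bullet> (M ** B) = (\<Sum>i\<in>UNIV. \<Sum>j\<in>UNIV. A$i$j * (\<Sum>k\<in>UNIV. M$i$k * B$k$j))"
    by (simp add: inner_vec_def matrix_matrix_mult_def)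
  also have "\<dots> = (\<Sum>j\<in>UNIV. \<Sum>i\<in>UNIV. A$i$j * (\<Sum>k\<in>UNIV. M$i$k * B$k$j))" by (rule sum.swap)
  also have "\<dots> = (\<Sum>j\<in>UNIV. column j A \<bullet> (M *v column j B))"
    by (simp add: inner_vec_def matrix_vector_mult_def column_def)
  finally show ?thesis .
qed

lemma norm_cols: "(norm A)^2 = (\<Sum>j\<in>UNIV. (norm (column j A))^2)" for A :: "real^'n^'p"
proof -
  have "(norm A)^2 = A \<bullet> (mat 1 ** A)" by (simp add: power2_norm_eq_inner)
  also have "\<dots> = (\<Sum>j\<in>UNIV. (norm (column j A))^2)" unfolding inner_cols by (simp add: power2_norm_eq_inner)
  finally show ?thesis .
qed

lemma quad_scale: "(c *\<^sub>R v) \<bullet> (A *v (c *\<^sub>R v)) = c^2 * (v \<bullet> (A *v v))" for A :: "real^'p^'p"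
  by (simp add: matrix_vector_mult_scaleR power2_eq_square)

lemma quad_min: fixes A :: "real^'p^'p"
  shows "\<exists>u. norm u = 1 \<and> (\<forall>v. (u \<bullet> (A *v u)) * (norm v)^2 \<le> v \<bullet> (A *v v))"
proof -
  have ne: "sphere (0::real^'p) 1 \<noteq> {}"
  proof -
    have "(axis undefined 1::real^'p) \<in> sphere 0 1" by simp
    then show ?thesis by blast
  qed
  have "continuous_on (sphere (0::real^'p) 1) (\<lambda>v. v \<bullet> (A *v v))"
    by (intro continuous_intros continuous_on_id linear_continuous_on) (simp add: linear_conv_bounded_linear[symmetric])
  then obtain u where u: "u \<in> sphere 0 1" and min: "\<And>w. w \<in> sphere 0 1 \<Longrightarrow> u \<bullet> (A *v u) \<le> w \<bullet> (A *v w)"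
    using continuous_attains_inf[OF compact_sphere ne] by blast
  have "(u \<bullet> (A *v u)) * (norm v)^2 \<le> v \<bullet> (A *v v)" for v
  proof (cases "v = 0")
    case True then show ?thesis by simp
  next
    case False
    let ?w = "(1/norm v) *\<^sub>R v"
    have "?w \<in> sphere 0 1" using False by simp
    then have "u \<bullet> (A *v u) \<le> ?w \<bullet> (A *v ?w)" by (rule min)
    also have "\<dots> = (v \<bullet> (A *v v)) / (norm v)^2" unfolding quad_scale by (simp add: power_divide)
    finally show ?thesis using False by (simp add: pos_le_divide_eq)
  qed
  then show ?thesis using u by auto
qed

lemma quad_zero: fixes b c :: real
  assumes h: "\<And>t. 0 \<le> 2*t*b + t^2*c" and c: "c \<ge> 0" shows "b = 0"
proof -
  define t where "t = - b / (c + 1)"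
  have cp: "c + 1 > 0" using c by simp
  have "0 \<le> 2*t*b + t^2*c" by (rule h)
  then have "0 \<le> (2*t*b + t^2*c) * (c+1)^2" using cp by simp
  also have "(2*t*b + t^2*c) * (c+1)^2 = -(b^2 * (c + 2))"
  proof -
    have tc: "t * (c+1) = -b" unfolding t_def using cp by simp
    have "(2*t*b + t^2*c) * (c+1)^2 = 2*b*(t*(c+1))*(c+1) + (t*(c+1))^2*c"
      by (simp add: power2_eq_square algebra_simps)
    also have "\<dots> = -(b^2 * (c + 2))" unfolding tc by (simp add: power2_eq_square algebra_simps)
    finally show ?thesis .
  qed
  finally have "b^2 * (c+2) \<le> 0" by simp
  then have "b^2 \<le> 0" using c by (simp add: mult_le_0_iff)
  then show ?thesis by simp
qed

lemma inner_mv_transpose: "x \<bullet> (A *v y) = (transpose A *v x) \<bullet> y" for A :: "real^'n^'m"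
  by (metis dot_lmul_matrix transpose_matrix_vector)

lemma sym_eig: fixes A :: "real^'p^'p"
  assumes sym: "transpose A = A"
  shows "\<exists>m u. u \<noteq> 0 \<and> A *v u = m *\<^sub>R u \<and> (\<forall>v. m * (norm v)^2 \<le> v \<bullet> (A *v v))"
proof -
  obtain u where u1: "norm u = 1" and mn: "\<And>v. (u \<bullet> (A *v u)) * (norm v)^2 \<le> v \<bullet> (A *v v)"
    using quad_min by blast
  define m where "m = u \<bullet> (A *v u)"
  define q where "q = (\<lambda>v. A *v v - m *\<^sub>R v)"
  have qpos: "0 \<le> v \<bullet> q v" for v
    using mn[of v] unfolding q_def m_def by (simp add: inner_diff_right power2_norm_eq_inner)
  have q0: "u \<bullet> q u = 0" unfolding q_def m_def using u1 by (simp add: inner_diff_right dot_square_norm)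
  have qsym: "x \<bullet> q y = q x \<bullet> y" for x y
    unfolding q_def by (simp add: inner_diff_right inner_diff_left inner_mv_transpose[of x A y] sym)
  have qlin: "q (x + t *\<^sub>R y) = q x + t *\<^sub>R q y" for x y t
    unfolding q_def by (simp add: matrix_vector_right_distrib matrix_vector_mult_scaleR algebra_simps)
  have "q u = 0"
  proof -
    let ?w = "q u"
    let ?b = "?w \<bullet> ?w" let ?c = "?w \<bullet> q ?w"
    have c0: "?c \<ge> 0" by (rule qpos)
    have "0 \<le> (u + t *\<^sub>R ?w) \<bullet> q (u + t *\<^sub>R ?w)" for t by (rule qpos)
    then have ineq: "0 \<le> 2 * t * ?b + t^2 * ?c" for t
      unfolding qlin using q0 qsym[of u ?w]
      by (simp add: inner_add_left inner_add_right power2_eq_square algebra_simps)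
    have "?b = 0" by (rule quad_zero[OF ineq c0])
    then show ?thesis by simp
  qed
  then have "A *v u = m *\<^sub>R u" unfolding q_def by simp
  moreover have "u \<noteq> 0" using u1 by auto
  moreover have "\<forall>v. m * (norm v)^2 \<le> v \<bullet> (A *v v)" using mn m_def by simp
  ultimately show ?thesis by blast
qed

lemma eig_finite: fixes A :: "real^'p^'p"
  assumes sym: "transpose A = A"
  shows "finite {c. \<exists>v. v \<noteq> 0 \<and> A *v v = c *\<^sub>R v}"
proof -
  define E where "E = {c. \<exists>v. v \<noteq> 0 \<and> A *v v = c *\<^sub>R v}"
  define ev where "ev c = (SOME v. v \<noteq> 0 \<and> A *v v = c *\<^sub>R v)" for c
  have ev: "ev c \<noteq> 0 \<and> A *v ev c = c *\<^sub>R ev c" if "c \<in> E" for c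
    using that unfolding E_def ev_def by (metis (mono_tags, lifting) mem_Collect_eq someI_ex)
  have orth: "ev c1 \<bullet> ev c2 = 0" if "c1 \<in> E" "c2 \<in> E" "c1 \<noteq> c2" for c1 c2
  proof -
    have "c1 * (ev c1 \<bullet> ev c2) = (A *v ev c1) \<bullet> ev c2" using ev[OF that(1)] by simp
    also have "\<dots> = ev c1 \<bullet> (A *v ev c2)" using inner_mv_transpose[of "ev c1" A "ev c2"] sym by simp
    also have "\<dots> = c2 * (ev c1 \<bullet> ev c2)" using ev[OF that(2)] by simp
    finally show ?thesis using that(3) by simp
  qed
  have inj: "inj_on ev E"
  proof (rule inj_onI)
    fix c1 c2 assume "c1 \<in> E" "c2 \<in> E" "ev c1 = ev c2"
    then show "c1 = c2" using orth ev by (metis inner_eq_zero_iff)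
  qed
  have "pairwise orthogonal (ev ` E)"
    unfolding pairwise_def orthogonal_def using orth by (metis imageE)
  moreover have "0 \<notin> ev ` E" using ev by auto
  ultimately have "independent (ev ` E)" by (rule pairwise_orthogonal_independent)
  then have "finite (ev ` E)" using independent_bound by blast
  then show ?thesis using inj finite_imageD E_def by blast
qed

lemma lambda_min_le: fixes A :: "real^'p^'p"
  assumes sym: "transpose A = A" and lam: "lambda_min A \<ge> c"
  shows "c * (norm v)^2 \<le> v \<bullet> (A *v v)"
proof -
  obtain m u where u: "u \<noteq> 0" "A *v u = m *\<^sub>R u" and mn: "\<forall>v. m * (norm v)^2 \<le> v \<bullet> (A *v v)"
    using sym_eig[OF sym] by blast
  have "m \<in> {c. \<exists>v. v \<noteq> 0 \<and> A *v v = c *\<^sub>R v}" using u by blast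
  then have "lambda_min A \<le> m" unfolding lambda_min_def using eig_finite[OF sym] by (rule Min_le[rotated])
  then have "c \<le> m" using lam by simp
  then have "c * (norm v)^2 \<le> m * (norm v)^2" by (simp add: mult_right_mono)
  then show ?thesis using mn by (meson order_trans)
qed

lemma integral_cont:
  fixes F g :: "real \<Rightarrow> 'a::banach"
  assumes h: "\<And>t. t \<ge> 0 \<Longrightarrow> (g has_integral (F t - F 0)) {0..t}"
  shows "continuous_on {0..T} F"
proof (cases "T \<ge> 0")
  case False then show ?thesis by simp
next
  case True
  have "g integrable_on {0..T}" using h[OF True] by blast
  then have c: "continuous_on {0..T} (\<lambda>x. F 0 + integral {0..x} g)"
    by (intro continuous_intros indefinite_integral_continuous_1)
  show ?thesis
  proof (rule continuous_on_eq[OF c])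
    fix x assume "x \<in> {0..T}"
    then have "integral {0..x} g = F x - F 0" using h by (simp add: integral_unique)
    then show "F 0 + integral {0..x} g = F x" by simp
  qed
qed

lemma filt_le:
  fixes f phi :: "real \<Rightarrow> real"
  assumes k: "k > 0"
    and h: "\<And>t. t \<ge> 0 \<Longrightarrow> ((\<lambda>s. (1/k) * (phi s - f s)) has_integral (f t - f 0)) {0..t}"
    and f0: "f 0 \<le> B" and phiB: "\<And>s. s \<ge> 0 \<Longrightarrow> phi s \<le> B"
    and t0: "t0 \<ge> 0"
  shows "f t0 \<le> B"
proof (rule ccontr)
  assume "\<not> f t0 \<le> B"
  then have ft0: "f t0 > B" by simp
  let ?g = "\<lambda>s. (1/k) * (phi s - f s)"
  have cont: "continuous_on {0..t0} f" by (rule integral_cont[OF h])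
  define S where "S = {s \<in> {0..t0}. f s \<le> B}"
  have Scl: "closed S" unfolding S_def
    using continuous_closed_preimage[OF cont closed_atLeastAtMost[of 0 t0], of "{..B}"]
    by (simp add: vimage_def Int_def conj_commute)
  have "0 \<in> S" unfolding S_def using f0 t0 by simp
  then have Sne: "S \<noteq> {}" by blast
  have Sbd: "bdd_above S" unfolding S_def by (rule bdd_aboveI[of _ t0]) auto
  define s0 where "s0 = Sup S"
  have s0S: "s0 \<in> S" unfolding s0_def by (rule closed_contains_Sup[OF Sne Sbd Scl])
  then have s0: "0 \<le> s0" "s0 \<le> t0" "f s0 \<le> B" unfolding S_def by auto
  have above: "f s > B" if "s0 < s" "s \<le> t0" for s
  proof (rule ccontr)
    assume "\<not> f s > B"
    then have "s \<in> S" unfolding S_def using that s0 by auto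
    then have "s \<le> s0" unfolding s0_def by (rule cSup_upper[OF _ Sbd])
    then show False using that by simp
  qed
  have int0: "?g integrable_on {0..t0}" using h[OF t0] by blast
  have I1: "(?g has_integral (f s0 - f 0)) {0..s0}" using h s0 by simp
  have "?g integrable_on {s0..t0}" by (rule integrable_subinterval_real[OF int0]) (use s0 in auto)
  then have I2: "(?g has_integral integral {s0..t0} ?g) {s0..t0}" by (rule integrable_integral)
  have "(?g has_integral (f s0 - f 0 + integral {s0..t0} ?g)) {0..t0}"
    by (rule has_integral_combine[OF s0(1) s0(2) I1 I2])
  then have eq: "f s0 - f 0 + integral {s0..t0} ?g = f t0 - f 0"
    using h[OF t0] has_integral_unique by blast
  have I3: "((\<lambda>s. if s = s0 then 0 else ?g s) has_integral integral {s0..t0} ?g) {s0..t0}"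
    by (rule has_integral_spike_finite[OF _ _ I2, of "{s0}"]) auto
  have "integral {s0..t0} ?g \<le> 0"
  proof (rule has_integral_le[OF I3 has_integral_0])
    fix s assume s: "s \<in> {s0..t0}"
    show "(if s = s0 then 0 else ?g s) \<le> 0"
    proof (cases "s = s0")
      case False
      then have "f s > B" using above s by auto
      moreover have "phi s \<le> B" using phiB s s0 by auto
      ultimately show ?thesis using False k by (simp add: divide_nonpos_pos)

    qed simp
  qed
  then have "f t0 \<le> f s0" using eq by simp
  then show False using ft0 s0 by simp
qed

lemma filt_bound_vec:
  fixes f phi :: "real \<Rightarrow> real^'n" and B :: real
  assumes k: "k > 0"
    and h: "\<And>t. t \<ge> 0 \<Longrightarrow> ((\<lambda>s. (1/k) *\<^sub>R (phi s - f s)) has_integral (f t - f 0)) {0..t}"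
    and f0: "f 0 = 0" and phiB: "\<And>s. s \<ge> 0 \<Longrightarrow> norm (phi s) \<le> B"
    and t0: "t0 \<ge> 0"
  shows "norm (f t0) \<le> real CARD('n) * B"
proof -
  have B0: "B \<ge> 0" using phiB[of 0] norm_ge_zero[of "phi 0"] by linarith
  have comp: "\<bar>f t0 $ i\<bar> \<le> B" for i
  proof -
    have hi: "((\<lambda>s. (1/k) * (phi s $ i - f s $ i)) has_integral (f t $ i - f 0 $ i)) {0..t}" if "t \<ge> 0" for t
      using has_integral_linear[OF h[OF that] bounded_linear_vec_nth[of i]] by (simp add: o_def)
    have hi': "((\<lambda>s. (1/k) * ((- phi s $ i) - (- f s $ i))) has_integral ((- f t $ i) - (- f 0 $ i))) {0..t}" if "t \<ge> 0" for t
      using has_integral_neg[OF hi[OF that]] by (simp add: algebra_simps)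
    have pb: "\<bar>phi s $ i\<bar> \<le> B" if "s \<ge> 0" for s
      using component_le_norm_cart[of "phi s" i] phiB[OF that] by linarith
    have "f t0 $ i \<le> B"
    proof (rule filt_le[where f="\<lambda>s. f s $ i" and phi="\<lambda>s. phi s $ i", OF k hi])
      show "f 0 $ i \<le> B" using f0 B0 by simp
      show "phi s $ i \<le> B" if "s \<ge> 0" for s using pb[OF that] by linarith
      show "0 \<le> t0" by (rule t0)
    qed
    moreover have "- f t0 $ i \<le> B"
    proof (rule filt_le[where f="\<lambda>s. - f s $ i" and phi="\<lambda>s. - phi s $ i", OF k hi'])
      show "- f 0 $ i \<le> B" using f0 B0 by simp
      show "- phi s $ i \<le> B" if "s \<ge> 0" for s using pb[OF that] by linarith
      show "0 \<le> t0" by (rule t0)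
    qed

    ultimately show ?thesis by simp
  qed
  have "norm (f t0) \<le> (\<Sum>i\<in>UNIV. \<bar>f t0 $ i\<bar>)" by (rule norm_le_l1_cart)
  also have "\<dots> \<le> (\<Sum>i\<in>(UNIV::'n set). B)" by (rule sum_mono) (rule comp)
  also have "\<dots> = real CARD('n) * B" by simp
  finally show ?thesis .
qed

lemma lin_mr: "linear (\<lambda>A::real^'n^'p. A ** (C::real^'q^'n))"
  by (rule linearI) (simp_all add: vec_eq_iff matrix_matrix_mult_def sum.distrib algebra_simps sum_distrib_left)

lemma lin_ml: "linear (\<lambda>A::real^'q^'n. (C::real^'n^'p) ** A)"
  by (rule linearI) (simp_all add: vec_eq_iff matrix_matrix_mult_def sum.distrib algebra_simps sum_distrib_left)

lemma lin_tr: "linear (transpose :: real^'n^'p \<Rightarrow> real^'p^'n)"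
  by (rule linearI) (simp_all add: vec_eq_iff transpose_def)

lemma bl_mr: "bounded_linear (\<lambda>A::real^'n^'p. A ** (C::real^'q^'n))"
  using lin_mr linear_conv_bounded_linear by blast
lemma bl_ml: "bounded_linear (\<lambda>A::real^'q^'n. (C::real^'n^'p) ** A)"
  using lin_ml linear_conv_bounded_linear by blast
lemma bl_tr: "bounded_linear (transpose :: real^'n^'p \<Rightarrow> real^'p^'n)"
  using lin_tr linear_conv_bounded_linear by blast

lemma outer_lin: "outer a (transpose W *v a + e) = outer a a ** W + outer a e"
  for a :: "real^'p" and W :: "real^'n^'p"
  by (simp add: vec_eq_iff outer_def matrix_matrix_mult_def matrix_vector_mult_def transpose_def
      sum_distrib_left algebra_simps)

lemma outer_sym: "transpose (outer a a) = outer a a" for a :: "real^'p"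
  by (simp add: vec_eq_iff outer_def transpose_def mult.commute)

lemma norm_outer: "norm (outer a b) = norm a * norm b" for a :: "real^'p" and b :: "real^'n"
proof -
  have o: "outer a b = (\<chi> i. a$i *\<^sub>R b)" by (simp add: vec_eq_iff outer_def)
  have "(norm (outer a b))^2 = (\<Sum>i\<in>UNIV. (a$i *\<^sub>R b) \<bullet> (a$i *\<^sub>R b))"
    unfolding power2_norm_eq_inner o by (simp add: inner_vec_def)
  also have "\<dots> = (\<Sum>i\<in>UNIV. a$i * a$i) * (b \<bullet> b)" by (simp add: sum_distrib_right mult.assoc)
  also have "\<dots> = (norm a * norm b)^2" by (simp add: power_mult_distrib power2_norm_eq_inner inner_vec_def)
  finally show ?thesis by (simp add: power2_eq_imp_eq)
qed

lemma cont_outer: "continuous_on S f \<Longrightarrow> continuous_on S g \<Longrightarrow> continuous_on S (\<lambda>s. outer (f s) (g s))"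
  for f :: "real \<Rightarrow> real^'p" and g :: "real \<Rightarrow> real^'n"
  unfolding outer_def by (intro continuous_intros)

lemma bb_quad: "bounded_bilinear (\<lambda>A B::real^'n^'p. A \<bullet> (G ** B))" for G :: "real^'p^'p"
  using bounded_bilinear.comp[OF bounded_bilinear_inner bounded_linear_ident bl_ml[of G]] by simp

lemma V_deriv:
  fixes Wh R :: "real \<Rightarrow> real^'n^'p" and Gam G :: "real^'p^'p" and W1 :: "real^'n^'p"
  assumes GG: "Gam ** G = mat 1" "G ** Gam = mat 1" and sym: "transpose Gam = Gam"
    and der: "(Wh has_vector_derivative (- (Gam ** R t))) (at t within S)"
  shows "((\<lambda>s. (1/2) * trace (transpose (W1 - Wh s) ** G ** (W1 - Wh s))) has_real_derivative
           ((W1 - Wh t) \<bullet> R t)) (at t within S)"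
proof -
  have fe: "(\<lambda>s. (1/2) * trace (transpose (W1 - Wh s) ** G ** (W1 - Wh s)))
       = (\<lambda>s. (1/2) * ((W1 - Wh s) \<bullet> (G ** (W1 - Wh s))))"
    by (simp add: matrix_mul_assoc[symmetric] trace_tr)
  have dW: "((\<lambda>s. W1 - Wh s) has_vector_derivative (Gam ** R t)) (at t within S)"
    using has_vector_derivative_diff[OF has_vector_derivative_const der] by simp
  have d2: "((\<lambda>s. (W1 - Wh s) \<bullet> (G ** (W1 - Wh s))) has_vector_derivative
     ((W1 - Wh t) \<bullet> (G ** (Gam ** R t)) + (Gam ** R t) \<bullet> (G ** (W1 - Wh t)))) (at t within S)"
    using bounded_bilinear.has_vector_derivative[OF bb_quad dW dW] by simp
  have e1: "(W1 - Wh t) \<bullet> (G ** (Gam ** R t)) = (W1 - Wh t) \<bullet> R t"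
    by (simp add: matrix_mul_assoc GG)
  have e2: "(Gam ** R t) \<bullet> (G ** (W1 - Wh t)) = (W1 - Wh t) \<bullet> R t"
  proof -
    have "(Gam ** R t) \<bullet> (G ** (W1 - Wh t)) = (G ** (W1 - Wh t)) \<bullet> (Gam ** R t)" by (rule inner_commute)
    also have "\<dots> = (transpose Gam ** (G ** (W1 - Wh t))) \<bullet> R t" by (rule inner_mm)
    also have "\<dots> = (W1 - Wh t) \<bullet> R t" by (simp add: sym matrix_mul_assoc GG)
    finally show ?thesis .
  qed
  have "((\<lambda>s. (W1 - Wh s) \<bullet> (G ** (W1 - Wh s))) has_real_derivative (2 * ((W1 - Wh t) \<bullet> R t))) (at t within S)"
    using d2 unfolding e1 e2 has_real_derivative_iff_has_vector_derivative by simp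
  from DERIV_cmult[OF this, of "1/2"] show ?thesis unfolding fe by simp
qed

lemma compare:
  fixes V :: "real \<Rightarrow> real"
  assumes a: "a > 0" and T1: "T1 > 0"
    and d: "\<And>t. t \<ge> T1 \<Longrightarrow> \<exists>D. (V has_real_derivative D) (at t within {0..}) \<and> D \<le> - a * V t + c"
    and t: "t \<ge> T1"
  shows "V t \<le> c/a + exp (- a * (t - T1)) * (V T1 - c/a)"
proof -
  define g where "g s = exp (a * s) * (V s - c/a)" for s
  have "g t \<le> g T1"
  proof (rule DERIV_nonpos_imp_nonincreasing[OF t])
    fix s assume s: "T1 \<le> s" "s \<le> t"
    obtain D where D: "(V has_real_derivative D) (at s within {0..})" "D \<le> - a * V s + c"
      using d[of s] s by blast
    have "at s within {0..} = at s"
      by (rule at_within_interior) (use s T1 in simp)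
    then have D': "(V has_real_derivative D) (at s)" using D(1) by simp
    have "(g has_real_derivative (a * exp (a * s) * (V s - c/a) + exp (a * s) * D)) (at s)"
      unfolding g_def by (auto intro!: derivative_eq_intros D')
    moreover have "a * exp (a * s) * (V s - c/a) + exp (a * s) * D \<le> 0"
    proof -
      have "a * exp (a * s) * (V s - c/a) + exp (a * s) * D = exp (a * s) * (a * V s - c + D)"
        using a by (simp add: field_simps)
      also have "\<dots> \<le> 0" using D(2) by (intro mult_nonneg_nonpos) auto
      finally show ?thesis .
    qed
    ultimately show "\<exists>y. (g has_real_derivative y) (at s) \<and> y \<le> 0" by blast
  qed
  then have "exp (a * t) * (V t - c/a) \<le> exp (a * T1) * (V T1 - c/a)" unfolding g_def .
  then have "V t - c/a \<le> exp (a * T1) * (V T1 - c/a) / exp (a * t)"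
    by (simp add: pos_le_divide_eq mult.commute)
  also have "\<dots> = exp (- a * (t - T1)) * (V T1 - c/a)"
  proof -
    have "exp (- a * (t - T1)) = exp (a * T1) / exp (a * t)"
      by (simp add: exp_diff[symmetric] algebra_simps)
    then show ?thesis by simp
  qed

  finally show ?thesis by simp
qed

lemma exp_lim: "a > 0 \<Longrightarrow> ((\<lambda>t. exp (- a * (t - T1)) * M) \<longlongrightarrow> 0) at_top" for a T1 M :: real
proof -
  assume a: "a > 0"
  have 1: "LIM t at_top. (-T1) + t :> at_top" by (rule filterlim_tendsto_add_at_top[OF tendsto_const filterlim_ident])
  have 2: "LIM t at_top. a * ((-T1) + t) :> at_top" by (rule filterlim_tendsto_pos_mult_at_top[OF tendsto_const a 1])
  have 3: "LIM t at_top. - (a * ((-T1) + t)) :> at_bot" using 2 by (subst (asm) filterlim_uminus_at_top)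
  have 4: "((\<lambda>t. exp (- (a * ((-T1) + t)))) \<longlongrightarrow> 0) at_top" by (rule filterlim_compose[OF exp_at_bot 3])
  have 5: "((\<lambda>t. exp (- (a * ((-T1) + t))) * M) \<longlongrightarrow> 0 * M) at_top" by (rule tendsto_mult[OF 4 tendsto_const])
  have e: "(\<lambda>t. exp (- (a * ((-T1) + t))) * M) = (\<lambda>t. exp (- a * (t - T1)) * M)" by (rule ext) (simp add: algebra_simps)
  show ?thesis using 5 unfolding e by simp
qed

lemma amgm: fixes lam nu w :: real assumes "lam > 0"
  shows "nu * w \<le> lam/2 * w^2 + nu^2/(2*lam)"
proof -
  have "lam/2 * w^2 + nu^2/(2*lam) - nu * w = (lam*w - nu)^2 / (2*lam)"
    using assms by (simp add: field_simps power2_eq_square)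
  also have "\<dots> \<ge> 0" using assms by simp
  finally show ?thesis by simp
qed

lemma quad_cols_lower:
  fixes M :: "real^'p^'p" and A :: "real^'n^'p"
  assumes "\<And>v. c * (norm v)^2 \<le> v \<bullet> (M *v v)"
  shows "c * (norm A)^2 \<le> A \<bullet> (M ** A)"
  unfolding inner_cols norm_cols sum_distrib_left by (rule sum_mono) (rule assms)

theorem theorem1:
  fixes W1 :: "real^'n^'p"
    and x :: "real \<Rightarrow> real^'n" and Phi :: "real \<Rightarrow> real^'p" and epsT :: "real \<Rightarrow> real^'n"
    and p1 p2 k l :: real
    and Phif :: "real \<Rightarrow> real^'p" and xf xfdot :: "real \<Rightarrow> real^'n" and epsTf :: "real \<Rightarrow> real^'n"
    and N :: nat and tr :: "nat \<Rightarrow> real"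
    and Gam :: "real^'p^'p" and What :: "real \<Rightarrow> real^'n^'p"
    and T1 lambda0 :: real
  assumes x_eq: "\<And>t. t \<ge> 0 \<Longrightarrow>
              ((\<lambda>s. transpose W1 *v Phi s + epsT s) has_integral (x t - x 0)) {0..t}"
    and Phi_pc: "piecewise_continuous Phi" and epsT_pc: "piecewise_continuous epsT"
    and Phi_bd: "\<And>t. t \<ge> 0 \<Longrightarrow> norm (Phi t) \<le> p1"
    and epsT_bd: "\<And>t. t \<ge> 0 \<Longrightarrow> norm (epsT t) \<le> p2"
    and k_pos: "k > 0" and l_pos: "l > 0"
    and Phif_0: "Phif 0 = 0"
    and Phif_eq: "\<And>t. t \<ge> 0 \<Longrightarrow>
              ((\<lambda>s. (1 / k) *\<^sub>R (Phi s - Phif s)) has_integral (Phif t - Phif 0)) {0..t}"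
    and xf_0: "xf 0 = x 0"
    and xf_der: "\<And>t. t \<ge> 0 \<Longrightarrow> (xf has_vector_derivative xfdot t) (at t within {0..})"
    and xf_eq: "\<And>t. t \<ge> 0 \<Longrightarrow> k *\<^sub>R xfdot t + xf t = x t"
    and epsTf_0: "epsTf 0 = 0"
    and epsTf_eq: "\<And>t. t \<ge> 0 \<Longrightarrow>
              ((\<lambda>s. (1 / k) *\<^sub>R (epsT s - epsTf s)) has_integral (epsTf t - epsTf 0)) {0..t}"
    and N_ge: "N \<ge> CARD('p)"
    and tr_nonneg: "\<And>j. j \<in> {1..N} \<Longrightarrow> tr j \<ge> 0"
    and Gam_pd: "pos_def Gam"
    and What_sol: "estimator_sol Gam l Phif xfdot N tr What"
    and PE: "persistently_exciting Phi"
    and T1_pos: "T1 > 0" and lambda0_pos: "lambda0 > 0"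
    and P_min: "\<And>t. t \<ge> T1 \<Longrightarrow>
              lambda_min (Pi_mat l Phif t + (\<Sum>j=1..N. Pi_mat l Phif (tr j))) \<ge> lambda0"
  defines "Wt \<equiv> (\<lambda>t. W1 - What t)"
    and "V1 \<equiv> (\<lambda>t. (1/2) * trace (transpose (W1 - What t) ** matrix_inv Gam ** (W1 - What t)))"
    and "y1 \<equiv> (\<lambda>t. - integral {0..t} (\<lambda>\<tau>. exp (- l * (t - \<tau>)) *\<^sub>R outer (Phif \<tau>) (epsTf \<tau>)))"
  shows
    "((\<forall>t\<ge>0. epsT t = 0) \<longrightarrow>
        (\<forall>t\<ge>T1. \<exists>D. (V1 has_real_derivative D) (at t within {0..}) \<and>
                     D \<le> - lambda0 * (norm (Wt t))\<^sup>2)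
        \<and> (Wt \<longlongrightarrow> 0) at_top)
     \<and> (\<exists>\<nu>1. (\<forall>t\<ge>0. norm (y1 t + (\<Sum>j=1..N. y1 (tr j))) \<le> \<nu>1)
          \<and> (\<forall>t\<ge>T1. \<exists>D. (V1 has_real_derivative D) (at t within {0..}) \<and>
                     D \<le> - lambda0 * (norm (Wt t))\<^sup>2 + \<nu>1 * norm (Wt t) \<and>
                     (norm (Wt t) > \<nu>1 / lambda0 \<longrightarrow> D < 0))
          \<and> (\<exists>b. \<forall>What'. estimator_sol Gam l Phif xfdot N tr What' \<longrightarrow>
                (\<exists>T. \<forall>t\<ge>T. norm (W1 - What' t) \<le> b)))"
proof -
  let ?G = "matrix_inv Gam"
  have Gsym: "transpose Gam = Gam" using Gam_pd unfolding pos_def_def by blast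
  have ker: "\<forall>v. Gam *v v = 0 \<longrightarrow> v = 0"
  proof (intro allI impI)
    fix v :: "real^'p" assume h: "Gam *v v = 0"
    show "v = 0"
    proof (rule ccontr)
      assume "v \<noteq> 0"
      then have "0 < v \<bullet> (Gam *v v)" using Gam_pd unfolding pos_def_def by blast
      then show False using h by simp
    qed
  qed
  then have "\<exists>B. B ** Gam = mat 1" using matrix_left_invertible_ker by blast
  then have "invertible Gam" using invertible_left_inverse by blast
  then have GG: "Gam ** ?G = mat 1 \<and> ?G ** Gam = mat 1"
    unfolding invertible_def matrix_inv_def by (rule someI_ex)
  obtain u :: "real^'p" where u1: "norm u = 1" and umin: "\<And>v. (u \<bullet> (?G *v u)) * (norm v)^2 \<le> v \<bullet> (?G *v v)"
    using quad_min[of ?G] by blast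
  define mG where "mG = u \<bullet> (?G *v u)"
  have mG: "mG > 0"
  proof -
    define w where "w = ?G *v u"
    have Gw: "Gam *v w = u" unfolding w_def by (simp add: matrix_vector_mul_assoc GG)
    then have "w \<noteq> 0" using u1 by auto
    then have "0 < w \<bullet> (Gam *v w)" using Gam_pd unfolding pos_def_def by blast
    also have "w \<bullet> (Gam *v w) = mG" unfolding mG_def using Gw w_def by (simp add: inner_commute)
    finally show ?thesis .
  qed
  have Qlow: "mG * (norm A)^2 \<le> A \<bullet> (?G ** A)" for A :: "real^'n^'p"
    by (rule quad_cols_lower) (use umin mG_def in auto)
  obtain KG where KG: "KG > 0" "\<And>A::real^'n^'p. norm (?G ** A) \<le> norm A * KG"
    using bounded_linear.pos_bounded[OF bl_ml[of ?G]] by blast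
  have Qup: "A \<bullet> (?G ** A) \<le> KG * (norm A)^2" for A :: "real^'n^'p"
  proof -
    have "A \<bullet> (?G ** A) \<le> norm A * norm (?G ** A)" by (rule norm_cauchy_schwarz)
    also have "\<dots> \<le> norm A * (norm A * KG)" by (rule mult_left_mono[OF KG(2)]) simp
    finally show ?thesis by (simp add: power2_eq_square mult_ac)
  qed
  define VV where "VV Wh t = (1/2) * trace (transpose (W1 - Wh t) ** ?G ** (W1 - Wh t))" for Wh :: "real \<Rightarrow> real^'n^'p" and t
  have VV_eq: "VV Wh t = (1/2) * ((W1 - Wh t) \<bullet> (?G ** (W1 - Wh t)))" for Wh t
    unfolding VV_def by (simp add: matrix_mul_assoc[symmetric] trace_tr)
  have VVlow: "mG / 2 * (norm (W1 - Wh t))^2 \<le> VV Wh t" for Wh t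
    unfolding VV_eq using Qlow[of "W1 - Wh t"] by simp
  have VVup: "VV Wh t \<le> KG / 2 * (norm (W1 - Wh t))^2" for Wh t
    unfolding VV_eq using Qup[of "W1 - Wh t"] by simp
  have cPhif: "continuous_on {0..T} Phif" for T by (rule integral_cont[OF Phif_eq])
  have cepsTf: "continuous_on {0..T} epsTf" for T by (rule integral_cont[OF epsTf_eq])
  have xfdot_eq: "xfdot t = (1/k) *\<^sub>R (x t - xf t)" if "t \<ge> 0" for t
  proof -
    have "k *\<^sub>R xfdot t = x t - xf t" using xf_eq[OF that] by (simp add: eq_diff_eq)
    then have "(1/k) *\<^sub>R (k *\<^sub>R xfdot t) = (1/k) *\<^sub>R (x t - xf t)" by simp
    then show ?thesis using k_pos by simp
  qed
  define e where "e s = xfdot s - (transpose W1 *v Phif s + epsTf s)" for s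
  have e0: "e 0 = 0" unfolding e_def using xfdot_eq[of 0] xf_0 Phif_0 epsTf_0 by simp
  have eint: "((\<lambda>s. (1/k) *\<^sub>R (0 - e s)) has_integral (e t - e 0)) {0..t}" if t: "t \<ge> 0" for t
  proof -
    have I1: "((\<lambda>s. transpose W1 *v Phi s + epsT s) has_integral (x t - x 0)) {0..t}" by (rule x_eq[OF t])
    have I2: "(xfdot has_integral (xf t - xf 0)) {0..t}"
    proof (rule fundamental_theorem_of_calculus[OF t])
      fix s assume "s \<in> {0..t}"
      then show "(xf has_vector_derivative xfdot s) (at s within {0..t})"
        by (intro has_vector_derivative_within_subset[OF xf_der]) auto
    qed
    have I3: "((\<lambda>s. transpose W1 *v ((1/k) *\<^sub>R (Phi s - Phif s))) has_integral (transpose W1 *v (Phif t - Phif 0))) {0..t}"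
      using has_integral_linear[OF Phif_eq[OF t] matrix_vector_mul_bounded_linear[of "transpose W1"]] by (simp add: o_def)
    have I4: "((\<lambda>s. (1 / k) *\<^sub>R (epsT s - epsTf s)) has_integral (epsTf t - epsTf 0)) {0..t}" by (rule epsTf_eq[OF t])
    have I: "((\<lambda>s. (1/k) *\<^sub>R ((transpose W1 *v Phi s + epsT s) - xfdot s) - transpose W1 *v ((1/k) *\<^sub>R (Phi s - Phif s)) - (1/k) *\<^sub>R (epsT s - epsTf s))
       has_integral ((1/k) *\<^sub>R ((x t - x 0) - (xf t - xf 0)) - transpose W1 *v (Phif t - Phif 0) - (epsTf t - epsTf 0))) {0..t}"
      by (intro has_integral_diff has_integral_cmul I1 I2 I3 I4)
    have f_eq: "(1/k) *\<^sub>R ((transpose W1 *v Phi s + epsT s) - xfdot s) - transpose W1 *v ((1/k) *\<^sub>R (Phi s - Phif s)) - (1/k) *\<^sub>R (epsT s - epsTf s)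
       = (1/k) *\<^sub>R (0 - e s)" for s
      unfolding e_def by (simp add: algebra_simps matrix_vector_mult_scaleR matrix_vector_mult_diff_distrib)
    have v_eq: "(1/k) *\<^sub>R ((x t - x 0) - (xf t - xf 0)) - transpose W1 *v (Phif t - Phif 0) - (epsTf t - epsTf 0) = e t - e 0"
      unfolding e0 unfolding e_def using xfdot_eq[OF t] xf_0 Phif_0 epsTf_0 by (simp add: algebra_simps)
    show ?thesis using I by (simp only: f_eq v_eq)
  qed
  have xfdot_id: "xfdot s = transpose W1 *v Phif s + epsTf s" if "s \<ge> 0" for s
  proof -
    have "norm (e s) \<le> real CARD('n) * 0"
      by (rule filt_bound_vec[where f=e and phi="\<lambda>_. 0" and B=0, OF k_pos eint e0 _ that]) auto
    then show ?thesis unfolding e_def by simp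
  qed
  have int1: "(\<lambda>s. exp (- l * (t - s)) *\<^sub>R outer (Phif s) (Phif s)) integrable_on {0..t}" for t
    by (rule integrable_continuous_interval) (intro continuous_intros cont_outer cPhif)
  have int2: "(\<lambda>s. exp (- l * (t - s)) *\<^sub>R outer (Phif s) (epsTf s)) integrable_on {0..t}" for t
    by (rule integrable_continuous_interval) (intro continuous_intros cont_outer cPhif cepsTf)
  have Kf: "K_mat l Phif xfdot t = Pi_mat l Phif t ** W1 - y1 t" if t: "t \<ge> 0" for t
  proof -
    let ?h1 = "\<lambda>s. exp (- l * (t - s)) *\<^sub>R outer (Phif s) (Phif s)"
    let ?h2 = "\<lambda>s. exp (- l * (t - s)) *\<^sub>R outer (Phif s) (epsTf s)"
    have "K_mat l Phif xfdot t = integral {0..t} (\<lambda>s. ?h1 s ** W1 + ?h2 s)"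
      unfolding K_mat_def
    proof (rule integral_cong)
      fix s assume "s \<in> {0..t}"
      then have xs: "xfdot s = transpose W1 *v Phif s + epsTf s" by (simp add: xfdot_id)
      show "exp (- l * (t - s)) *\<^sub>R outer (Phif s) (xfdot s) = ?h1 s ** W1 + ?h2 s"
        by (simp only: xs outer_lin scaleR_add_right scalar_matrix_assoc)
    qed

    also have "\<dots> = integral {0..t} (\<lambda>s. ?h1 s ** W1) + integral {0..t} ?h2"
      by (rule integral_add) (use integrable_linear[OF int1 bl_mr[of W1]] int2 in \<open>auto simp: o_def\<close>)
    also have "integral {0..t} (\<lambda>s. ?h1 s ** W1) = integral {0..t} ?h1 ** W1"
      using integral_linear[OF int1 bl_mr[of W1]] by (simp add: o_def)
    finally show ?thesis unfolding Pi_mat_def y1_def by simp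
  qed
  have Pisym: "transpose (Pi_mat l Phif t) = Pi_mat l Phif t" for t
  proof -
    have "transpose (Pi_mat l Phif t) = integral {0..t} (\<lambda>s. transpose (exp (- l * (t - s)) *\<^sub>R outer (Phif s) (Phif s)))"
      unfolding Pi_mat_def using integral_linear[OF int1 bl_tr] by (simp add: o_def)
    then show ?thesis by (simp add: transpose_scalar outer_sym Pi_mat_def)
  qed
  define P where "P t = Pi_mat l Phif t + (\<Sum>j=1..N. Pi_mat l Phif (tr j))" for t
  define Y where "Y t = y1 t + (\<Sum>j=1..N. y1 (tr j))" for t
  have Psym: "transpose (P t) = P t" for t
    unfolding P_def linear_add[OF lin_tr] linear_sum[OF lin_tr] Pisym by simp
  define Bp where "Bp = real CARD('p) * p1"
  define Be where "Be = real CARD('n) * p2"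
  have Phif_bd: "norm (Phif s) \<le> Bp" if "s \<ge> 0" for s
    unfolding Bp_def by (rule filt_bound_vec[OF k_pos Phif_eq Phif_0 Phi_bd that])
  have epsTf_bd: "norm (epsTf s) \<le> Be" if "s \<ge> 0" for s
    unfolding Be_def by (rule filt_bound_vec[OF k_pos epsTf_eq epsTf_0 epsT_bd that])
  have Bp0: "Bp \<ge> 0" using Phif_bd[of 0] norm_ge_zero[of "Phif 0"] by linarith
  have Be0: "Be \<ge> 0" using epsTf_bd[of 0] norm_ge_zero[of "epsTf 0"] by linarith

  define C where "C = Bp * Be"
  have C0: "C \<ge> 0" unfolding C_def using Bp0 Be0 by simp
  have y1_bd: "norm (y1 t) \<le> C / l" if t: "t \<ge> 0" for t
  proof -
    have gint: "((\<lambda>s. exp (- l * (t - s)) * C) has_integral (C / l - C * exp (- l * t) / l)) {0..t}"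
    proof -
      have "((\<lambda>s. exp (- l * (t - s)) * C) has_integral ((\<lambda>s. C * exp (- l * (t - s)) / l) t - (\<lambda>s. C * exp (- l * (t - s)) / l) 0)) {0..t}"
      proof (rule fundamental_theorem_of_calculus[OF t])
        fix s assume "s \<in> {0..t}"
        have "((\<lambda>s. C * exp (- l * (t - s)) / l) has_real_derivative exp (- l * (t - s)) * C) (at s within {0..t})"
          using l_pos by (auto intro!: derivative_eq_intros simp: field_simps)
        then show "((\<lambda>s. C * exp (- l * (t - s)) / l) has_vector_derivative exp (- l * (t - s)) * C) (at s within {0..t})"
          by (simp add: has_real_derivative_iff_has_vector_derivative)
      qed
      then show ?thesis by simp
    qed
    have "norm (y1 t) = norm (integral {0..t} (\<lambda>s. exp (- l * (t - s)) *\<^sub>R outer (Phif s) (epsTf s)))"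
      unfolding y1_def by simp
    also have "\<dots> \<le> integral {0..t} (\<lambda>s. exp (- l * (t - s)) * C)"
    proof (rule integral_norm_bound_integral[OF int2])
      show "(\<lambda>s. exp (- l * (t - s)) * C) integrable_on {0..t}" using gint by blast
      fix s assume s: "s \<in> {0..t}"
      have "norm (exp (- l * (t - s)) *\<^sub>R outer (Phif s) (epsTf s)) = exp (- l * (t - s)) * (norm (Phif s) * norm (epsTf s))"
        by (simp add: norm_outer)
      also have "\<dots> \<le> exp (- l * (t - s)) * C" unfolding C_def
        using s Phif_bd epsTf_bd Bp0 by (intro mult_left_mono mult_mono) auto

      finally show "norm (exp (- l * (t - s)) *\<^sub>R outer (Phif s) (epsTf s)) \<le> exp (- l * (t - s)) * C" .
    qed
    also have "\<dots> = C / l - C * exp (- l * t) / l" using gint by (rule integral_unique)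
    also have "\<dots> \<le> C / l" using C0 l_pos by simp
    finally show ?thesis .
  qed
  define nu where "nu = (1 + real N) * (C / l)"
  have Y_bd: "norm (Y t) \<le> nu" if t: "t \<ge> 0" for t
  proof -
    have "norm (Y t) \<le> norm (y1 t) + norm (\<Sum>j=1..N. y1 (tr j))" unfolding Y_def by (rule norm_triangle_ineq)
    also have "norm (\<Sum>j=1..N. y1 (tr j)) \<le> (\<Sum>j=1..N. norm (y1 (tr j)))" by (rule norm_sum)
    also have "\<dots> \<le> (\<Sum>j=1..N. C / l)" by (rule sum_mono) (use y1_bd tr_nonneg in auto)
    finally show ?thesis unfolding nu_def using y1_bd[OF t] by (simp add: algebra_simps)
  qed
  have nu0: "nu \<ge> 0" unfolding nu_def using C0 l_pos by simp
  have mm_diff_l: "Cm ** (A - B) = Cm ** A - Cm ** B" for Cm :: "real^'p^'p" and A B :: "real^'n^'p"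
    by (rule linear_diff[OF lin_ml])
  have mm_add_r: "(A + B) ** Cm = A ** Cm + B ** Cm" for Cm :: "real^'n^'p" and A B :: "real^'p^'p"
    by (rule linear_add[OF lin_mr])
  have mm_sum_r: "(\<Sum>j\<in>S. A j) ** Cm = (\<Sum>j\<in>S. A j ** Cm)" for Cm :: "real^'n^'p" and A :: "nat \<Rightarrow> real^'p^'p" and S
    by (rule linear_sum[OF lin_mr])

  have R_eq: "Pi_mat l Phif t ** Wh - K_mat l Phif xfdot t + (\<Sum>j=1..N. Pi_mat l Phif (tr j) ** Wh - K_mat l Phif xfdot (tr j))
     = Y t - P t ** (W1 - Wh)" if t: "t \<ge> 0" for t and Wh :: "real^'n^'p"
  proof -
    have s1: "(\<Sum>j=1..N. Pi_mat l Phif (tr j) ** Wh - K_mat l Phif xfdot (tr j))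
       = (\<Sum>j=1..N. y1 (tr j) - Pi_mat l Phif (tr j) ** (W1 - Wh))"
      by (rule sum.cong[OF refl]) (simp add: Kf tr_nonneg mm_diff_l)
    show ?thesis unfolding s1 P_def Y_def
      by (simp add: Kf[OF t] mm_diff_l mm_add_r mm_sum_r sum_subtractf sum.distrib algebra_simps)

  qed
  have deriv_gen: "\<exists>D. (VV Wh has_real_derivative D) (at t within {0..}) \<and>
      D \<le> - lambda0 * (norm (W1 - Wh t))^2 + norm (Y t) * norm (W1 - Wh t)"
    if sol: "estimator_sol Gam l Phif xfdot N tr Wh" and t: "t \<ge> T1" for Wh :: "real \<Rightarrow> real^'n^'p" and t
  proof -
    have t0: "t \<ge> 0" using t T1_pos by linarith
    have all: "\<forall>t\<ge>0. (Wh has_vector_derivative (- (Gam ** (Pi_mat l Phif t ** Wh t - K_mat l Phif xfdot t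
            + (\<Sum>j=1..N. Pi_mat l Phif (tr j) ** Wh t - K_mat l Phif xfdot (tr j)))))) (at t within {0..})"
      using sol unfolding estimator_sol_def .
    have "(Wh has_vector_derivative (- (Gam ** (Pi_mat l Phif t ** Wh t - K_mat l Phif xfdot t
            + (\<Sum>j=1..N. Pi_mat l Phif (tr j) ** Wh t - K_mat l Phif xfdot (tr j)))))) (at t within {0..})"
      by (rule all[rule_format, OF t0])

    then have der: "(Wh has_vector_derivative (- (Gam ** (Y t - P t ** (W1 - Wh t))))) (at t within {0..})"
      unfolding R_eq[OF t0] .

    have d: "(VV Wh has_real_derivative ((W1 - Wh t) \<bullet> (Y t - P t ** (W1 - Wh t)))) (at t within {0..})"
      unfolding VV_def[abs_def] by (rule V_deriv[where R="\<lambda>s. Y s - P s ** (W1 - Wh s)", OF conjunct1[OF GG] conjunct2[OF GG] Gsym der])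

    have low: "lambda0 * (norm (W1 - Wh t))^2 \<le> (W1 - Wh t) \<bullet> (P t ** (W1 - Wh t))"
      by (rule quad_cols_lower) (rule lambda_min_le[OF Psym], use P_min[OF t] P_def in simp)
    have up: "(W1 - Wh t) \<bullet> Y t \<le> norm (Y t) * norm (W1 - Wh t)"
      using norm_cauchy_schwarz[of "W1 - Wh t" "Y t"] by (simp add: mult.commute)
    have "(W1 - Wh t) \<bullet> (Y t - P t ** (W1 - Wh t)) \<le> - lambda0 * (norm (W1 - Wh t))^2 + norm (Y t) * norm (W1 - Wh t)"
      using low up by (simp add: inner_diff_right)
    then show ?thesis using d by blast
  qed
  have V1_eq: "V1 = VV What" unfolding V1_def by (rule ext) (simp add: VV_def)
  have partB: "\<forall>t\<ge>T1. \<exists>D. (V1 has_real_derivative D) (at t within {0..}) \<and>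
                     D \<le> - lambda0 * (norm (Wt t))\<^sup>2 + nu * norm (Wt t) \<and>
                     (norm (Wt t) > nu / lambda0 \<longrightarrow> D < 0)"
  proof (intro allI impI)
    fix t assume t: "t \<ge> T1"
    obtain D where D: "(VV What has_real_derivative D) (at t within {0..})"
        "D \<le> - lambda0 * (norm (W1 - What t))^2 + norm (Y t) * norm (W1 - What t)"
      using deriv_gen[OF What_sol t] by blast
    have "norm (Y t) * norm (W1 - What t) \<le> nu * norm (W1 - What t)"
      using Y_bd[of t] t T1_pos by (intro mult_right_mono) auto
    then have D2: "D \<le> - lambda0 * (norm (Wt t))^2 + nu * norm (Wt t)" using D(2) unfolding Wt_def by simp
    have D3: "norm (Wt t) > nu / lambda0 \<longrightarrow> D < 0"
    proof
      let ?w = "norm (Wt t)"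
      assume h: "?w > nu / lambda0"
      have "nu / lambda0 \<ge> 0" using nu0 lambda0_pos by simp
      then have wpos: "?w > 0" using h by linarith
      have "nu < ?w * lambda0" using h lambda0_pos by (simp add: pos_divide_less_eq)
      then have "nu * ?w < (?w * lambda0) * ?w" using wpos by (rule mult_strict_right_mono)
      then have "- lambda0 * ?w^2 + nu * ?w < 0" by (simp add: power2_eq_square mult_ac)
      then show "D < 0" using D2 by linarith
    qed
    show "\<exists>D. (V1 has_real_derivative D) (at t within {0..}) \<and>
                     D \<le> - lambda0 * (norm (Wt t))\<^sup>2 + nu * norm (Wt t) \<and>
                     (norm (Wt t) > nu / lambda0 \<longrightarrow> D < 0)"
      using D(1) D2 D3 unfolding V1_eq by blast
  qed
  have partA: "(\<forall>t\<ge>0. epsT t = 0) \<longrightarrow>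
        (\<forall>t\<ge>T1. \<exists>D. (V1 has_real_derivative D) (at t within {0..}) \<and>
                     D \<le> - lambda0 * (norm (Wt t))\<^sup>2)
        \<and> (Wt \<longlongrightarrow> 0) at_top"
  proof
    assume eps0: "\<forall>t\<ge>0. epsT t = 0"
    have ef0: "epsTf s = 0" if "s \<ge> 0" for s
    proof -
      have "norm (epsTf s) \<le> real CARD('n) * 0"
        by (rule filt_bound_vec[OF k_pos epsTf_eq epsTf_0 _ that]) (use eps0 in auto)
      then show ?thesis by simp
    qed
    have y0: "y1 t = 0" if "t \<ge> 0" for t
    proof -
      have "integral {0..t} (\<lambda>\<tau>. exp (- l * (t - \<tau>)) *\<^sub>R outer (Phif \<tau>) (epsTf \<tau>)) = integral {0..t} (\<lambda>\<tau>. 0)"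
        by (rule integral_cong) (simp add: ef0 outer_def vec_eq_iff)
      then show ?thesis unfolding y1_def by simp
    qed
    have Y0: "Y t = 0" if "t \<ge> 0" for t
    proof -
      have "(\<Sum>j=1..N. y1 (tr j)) = 0" by (rule sum.neutral) (use y0 tr_nonneg in auto)
      then show ?thesis unfolding Y_def using y0[OF that] by simp
    qed
    have dA: "\<exists>D. (VV What has_real_derivative D) (at t within {0..}) \<and> D \<le> - lambda0 * (norm (W1 - What t))^2"
      if t: "t \<ge> T1" for t
    proof -
      have "Y t = 0" using Y0 t T1_pos by simp
      then show ?thesis using deriv_gen[OF What_sol t] by simp
    qed
    have c1: "\<forall>t\<ge>T1. \<exists>D. (V1 has_real_derivative D) (at t within {0..}) \<and>
                     D \<le> - lambda0 * (norm (Wt t))\<^sup>2"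
      using dA unfolding V1_eq Wt_def by blast
    define a where "a = lambda0 / (KG/2)"
    have apos: "a > 0" unfolding a_def using lambda0_pos KG by simp
    have cmpA: "\<exists>D. (VV What has_real_derivative D) (at t within {0..}) \<and> D \<le> - a * VV What t + 0"
      if t: "t \<ge> T1" for t
    proof -
      obtain D where D: "(VV What has_real_derivative D) (at t within {0..})" "D \<le> - lambda0 * (norm (W1 - What t))^2"
        using dA[OF t] by blast
      have "a * VV What t \<le> a * (KG / 2 * (norm (W1 - What t))^2)"
        using VVup apos by (intro mult_left_mono) auto
      also have "\<dots> = lambda0 * (norm (W1 - What t))^2" unfolding a_def using KG by simp
      finally show ?thesis using D by force
    qed
    define M where "M = VV What T1 * (2 / mG)"
    have wb: "(norm (Wt t))^2 \<le> exp (- a * (t - T1)) * M" if t: "t \<ge> T1" for t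
    proof -
      have v: "VV What t \<le> exp (- a * (t - T1)) * VV What T1"
        using compare[OF apos T1_pos cmpA t] by simp
      have "(norm (Wt t))^2 = (mG / 2 * (norm (W1 - What t))^2) * (2 / mG)" unfolding Wt_def using mG by simp
      also have "\<dots> \<le> VV What t * (2 / mG)" using VVlow mG by (intro mult_right_mono) auto
      also have "\<dots> \<le> (exp (- a * (t - T1)) * VV What T1) * (2 / mG)" using v mG by (intro mult_right_mono) auto
      also have "\<dots> = exp (- a * (t - T1)) * M" unfolding M_def by simp
      finally show ?thesis .
    qed
    have sq: "((\<lambda>t. (norm (Wt t))^2) \<longlongrightarrow> 0) at_top"
    proof (rule tendsto_sandwich[OF _ _ tendsto_const exp_lim[OF apos, of T1 M]])
      show "\<forall>\<^sub>F t in at_top. 0 \<le> (norm (Wt t))^2" by simp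
      show "\<forall>\<^sub>F t in at_top. (norm (Wt t))^2 \<le> exp (- a * (t - T1)) * M"
        unfolding eventually_at_top_linorder using wb by blast
    qed
    have "((\<lambda>t. sqrt ((norm (Wt t))^2)) \<longlongrightarrow> sqrt 0) at_top" by (rule tendsto_real_sqrt[OF sq])
    then have "((\<lambda>t. norm (Wt t)) \<longlongrightarrow> 0) at_top" by simp
    then have c2: "(Wt \<longlongrightarrow> 0) at_top" by (simp add: tendsto_norm_zero_iff)
    show "(\<forall>t\<ge>T1. \<exists>D. (V1 has_real_derivative D) (at t within {0..}) \<and>
                     D \<le> - lambda0 * (norm (Wt t))\<^sup>2)
        \<and> (Wt \<longlongrightarrow> 0) at_top" using c1 c2 by blast
  qed
  have uub: "\<exists>b. \<forall>What'. estimator_sol Gam l Phif xfdot N tr What' \<longrightarrow>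
                (\<exists>T. \<forall>t\<ge>T. norm (W1 - What' t) \<le> b)"
  proof -
    define a2 where "a2 = lambda0 / KG"
    define c2 where "c2 = nu^2 / (2*lambda0)"
    have a2: "a2 > 0" unfolding a2_def using lambda0_pos KG by simp
    define b where "b = sqrt ((c2/a2 + 1) * (2/mG))"
    show ?thesis
    proof (rule exI[of _ b], intro allI impI)
      fix Wh assume sol
: "estimator_sol Gam l Phif xfdot N tr Wh"
      have dd: "\<exists>D. (VV Wh has_real_derivative D) (at t within {0..}) \<and> D \<le> - a2 * VV Wh t + c2"
        if t: "t \<ge> T1" for t
      proof -
        let ?w = "norm (W1 - Wh t)"
        obtain D where D: "(VV Wh has_real_derivative D) (at t within {0..})"
            "D \<le> - lambda0 * ?w^2 + norm (Y t) * ?w"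
          using deriv_gen[OF sol t] by blast
        have "norm (Y t) * ?w \<le> nu * ?w"
          using Y_bd[of t] t T1_pos by (intro mult_right_mono) auto
        also have "\<dots> \<le> lambda0/2 * ?w^2 + c2" unfolding c2_def by (rule amgm[OF lambda0_pos])
        finally have D2: "D \<le> - (lambda0/2) * ?w^2 + c2" using D(2) by simp
        have "a2 * VV Wh t \<le> a2 * (KG / 2 * ?w^2)"
          using VVup a2 by (intro mult_left_mono) auto
        also have "\<dots> = lambda0/2 * ?w^2" unfolding a2_def using KG by simp
        finally show ?thesis using D(1) D2 by force
      qed
      have "\<forall>\<^sub>F t in at_top. exp (- a2 * (t - T1)) * (VV Wh T1 - c2/a2) < 1"
        by (rule order_tendstoD(2)[OF exp_lim[OF a2]]) simp
      then obtain T0 where T0: "\<And>t. t \<ge> T0 \<Longrightarrow> exp (- a2 * (t - T1)) * (VV Wh T1 - c2/a2) < 1"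
        unfolding eventually_at_top_linorder by blast
      show "\<exists>T. \<forall>t\<ge>T. norm (W1 - Wh t) \<le> b"
      proof (intro exI[of _ "max T0 T1"] allI impI)
        fix t assume "max T0 T1 \<le> t"
        then have t: "t \<ge> T1" "t \<ge> T0" by auto
        have "VV Wh t \<le> c2/a2 + exp (- a2 * (t - T1)) * (VV Wh T1 - c2/a2)"
          by (rule compare[OF a2 T1_pos dd t(1)])
        then have v: "VV Wh t \<le> c2/a2 + 1" using T0[OF t(2)] by linarith
        have "(norm (W1 - Wh t))^2 = (mG / 2 * (norm (W1 - Wh t))^2) * (2 / mG)" using mG by simp
        also have "\<dots> \<le> VV Wh t * (2 / mG)" using VVlow mG by (intro mult_right_mono) auto
        also have "\<dots> \<le> (c2/a2 + 1) * (2 / mG)" using v mG by (intro mult_right_mono) auto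
        finally show "norm (W1 - Wh t) \<le> b" unfolding b_def by (rule real_le_rsqrt)
      qed
    qed
  qed
  have Ybd': "\<forall>t\<ge>0. norm (y1 t + (\<Sum>j=1..N. y1 (tr j))) \<le> nu" using Y_bd unfolding Y_def by blast
  show ?thesis
    apply (rule conjI[OF partA])
    apply (rule exI[of _ nu])
    by (rule conjI[OF Ybd' conjI[OF partB uub]])






qed

end
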